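(* Let $p(n,k)$ be the number of partitions of the integer $n$ into exactly $k$ positive parts and $q(n,k)$ the number of partitions of $n$ into exactly $k$ pairwise distinct positive parts. Let $(n_m,k_m)_{m\ge1}$ be a sequence of pairs of integers with $k_m\ge 2$ and $n_m\ge k_m$. If $n_m/k_m^3\to\infty$ then $q(n_m,k_m)/p(n_m,k_m)\to 1$; if $n_m/k_m^3\to 0$ then $q(n_m,k_m)/p(n_m,k_m)\to 0$. Equivalently, the probability that a uniformly random partition of $n_m$ into $k_m$ positive parts has two equal parts tends to $0$ in the first case and to $1$ in the second.
   Context: A partition of $n$ into $k$ positive parts is a multiset of $k$ positive integers with sum $n$ (equivalently a sequence $1\le x_1\le\dots\le x_k$ with $\sum x_i=n$). *)

theory Defs
  imports Complex_Main "HOL-Library.Multiset"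
begin

definition partitions :: "nat \<Rightarrow> nat \<Rightarrow> nat multiset set" where
  "partitions n k = {M. size M = k \<and> sum_mset M = n \<and> 0 \<notin># M}"

definition p_part :: "nat \<Rightarrow> nat \<Rightarrow> nat" where
  "p_part n k = card (partitions n k)"

definition q_part :: "nat \<Rightarrow> nat \<Rightarrow> nat" where
  "q_part n k = card {M \<in> partitions n k. \<forall>x. count M x \<le> 1}"

end

theory Submission
  imports Defs "HOL-Combinatorics.Multiset_Permutations"
begin


definition comp :: "nat \<Rightarrow> nat \<Rightarrow> nat list set" where
  "comp n k = {xs. length xs = k \<and> sum_list xs = n \<and> 0 \<notin> set xs}"

definition wt :: "nat multiset \<Rightarrow> nat" where
  "wt M = (\<Prod>x\<in>set_mset M. fact (count M x))"

lemma finite_comp: "finite (comp n k)"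
proof -
  have "comp n k \<subseteq> {xs. set xs \<subseteq> {0..n} \<and> length xs = k}"
    by (auto simp: comp_def member_le_sum_list)
  moreover have "finite {xs. set xs \<subseteq> {0..n} \<and> length xs = k}"
    by (rule finite_lists_length_eq) simp
  ultimately show ?thesis by (rule finite_subset)
qed

lemma partitions_eq: "partitions n k = mset ` comp n k"
proof
  show "mset ` comp n k \<subseteq> partitions n k"
    by (auto simp: comp_def partitions_def sum_mset_sum_list)
  show "partitions n k \<subseteq> mset ` comp n k"
  proof
    fix M assume M: "M \<in> partitions n k"
    have "sorted_list_of_multiset M \<in> comp n k"
      using M by (auto simp: comp_def partitions_def sum_mset_sum_list[symmetric])
        (metis size_mset mset_sorted_list_of_multiset)
    thus "M \<in> mset ` comp n k" by (metis image_eqI mset_sorted_list_of_multiset)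
  qed
qed

lemma finite_partitions: "finite (partitions n k)"
  by (simp add: partitions_eq finite_comp)

lemma fiber_eq: "M \<in> partitions n k \<Longrightarrow> {x\<in>comp n k. mset x = M} = permutations_of_multiset M"
  by (auto simp: comp_def partitions_def permutations_of_multiset_def sum_mset_sum_list[symmetric]
      simp flip: size_mset set_mset_mset)

lemma sum_comp_group:
  "(\<Sum>x\<in>comp n k. g (mset x)) = (\<Sum>M\<in>partitions n k. card (permutations_of_multiset M) * g M)"
proof -
  have "(\<Sum>x\<in>comp n k. g (mset x)) = (\<Sum>M\<in>mset ` comp n k. \<Sum>x\<in>{x\<in>comp n k. mset x = M}. g (mset x))"
    by (rule sum.image_gen[OF finite_comp])
  also have "\<dots> = (\<Sum>M\<in>partitions n k. \<Sum>x\<in>{x\<in>comp n k. mset x = M}. g M)"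
    by (simp add: partitions_eq)
  also have "\<dots> = (\<Sum>M\<in>partitions n k. card (permutations_of_multiset M) * g M)"
    by (intro sum.cong refl) (simp add: fiber_eq)
  finally show ?thesis .
qed

lemma wt_perm: "card (permutations_of_multiset M) * wt M = fact (size M)"
  unfolding wt_def by (rule card_permutations_of_multiset_aux)

lemma wt_pos: "wt M \<ge> 1"
  unfolding wt_def by (metis One_nat_def Suc_leI fact_gt_zero prod_pos)

lemma wt_distinct: "\<forall>x. count M x \<le> 1 \<Longrightarrow> wt M = 1"
  unfolding wt_def
  by (rule prod.neutral) (metis One_nat_def count_eq_zero_iff fact_1 le_Suc_eq le_zero_eq)

lemma card_comp: "card (comp n k) = (\<Sum>M\<in>partitions n k. card (permutations_of_multiset M))"
  using sum_comp_group[where g="\<lambda>_. 1" and n=n and k=k] by simp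

lemma sum_wt: "(\<Sum>x\<in>comp n k. wt (mset x)) = fact k * p_part n k"
proof -
  have "(\<Sum>x\<in>comp n k. wt (mset x)) = (\<Sum>M\<in>partitions n k. fact k)"
    by (subst sum_comp_group, intro sum.cong refl) (simp add: wt_perm partitions_def)
  thus ?thesis by (simp add: p_part_def)
qed

lemma comp_le_p: "card (comp n k) \<le> fact k * p_part n k"
proof -
  have "card (comp n k) = (\<Sum>x\<in>comp n k. 1)" by simp
  also have "\<dots> \<le> (\<Sum>x\<in>comp n k. wt (mset x))" by (intro sum_mono wt_pos)
  finally show ?thesis by (simp add: sum_wt)
qed

lemma q_le_comp: "fact k * q_part n k \<le> card (comp n k)"
proof -
  let ?Q = "{M \<in> partitions n k. \<forall>x. count M x \<le> 1}"
  have "fact k * q_part n k = (\<Sum>M\<in>?Q. card (permutations_of_multiset M))"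
  proof -
    have "(\<Sum>M\<in>?Q. card (permutations_of_multiset M)) = (\<Sum>M\<in>?Q. fact k)"
      by (intro sum.cong refl) (metis (mono_tags, lifting) mem_Collect_eq mult.right_neutral
          partitions_def wt_distinct wt_perm)
    thus ?thesis by (simp add: q_part_def)
  qed
  also have "\<dots> \<le> (\<Sum>M\<in>partitions n k. card (permutations_of_multiset M))"
    by (rule sum_mono2[OF finite_partitions]) auto
  finally show ?thesis by (simp add: card_comp)
qed



definition Kk :: "nat \<Rightarrow> nat" where "Kk k = (\<Sum>i<k. i)"

definition shiftl :: "nat \<Rightarrow> nat list \<Rightarrow> nat list" where
  "shiftl k xs = map (\<lambda>i. xs ! i + i) [0..<k]"

lemma shiftl_nth: "i < k \<Longrightarrow> shiftl k xs ! i = xs ! i + i"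
  by (simp add: shiftl_def)

lemma shiftl_len: "length (shiftl k xs) = k"
  by (simp add: shiftl_def)

lemma shiftl_sorted:
  assumes "sorted xs" "length xs = k"
  shows "sorted_wrt (<) (shiftl k xs)"
proof -
  have "shiftl k xs ! i < shiftl k xs ! j" if "i < j" "j < k" for i j
  proof -
    have "xs ! i \<le> xs ! j" using assms that by (simp add: sorted_iff_nth_mono)
    thus ?thesis using that by (simp add: shiftl_nth)
  qed
  thus ?thesis by (simp add: sorted_wrt_iff_nth_less shiftl_len)
qed

lemma shiftl_sum: "length xs = k \<Longrightarrow> sum_list (shiftl k xs) = sum_list xs + Kk k"
  unfolding shiftl_def Kk_def
  by (simp add: sum_list_sum_nth sum.distrib atLeast0LessThan)

lemma len_sl: "length (sorted_list_of_multiset (M::nat multiset)) = size M"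
  by (metis size_mset mset_sorted_list_of_multiset)

lemma shift: "p_part m k \<le> q_part (m + Kk k) k"
proof -
  let ?S = "\<lambda>M. mset (shiftl k (sorted_list_of_multiset M))"
  let ?Q = "{M \<in> partitions (m + Kk k) k. \<forall>x. count M x \<le> 1}"
  have img: "?S ` partitions m k \<subseteq> ?Q"
  proof
    fix N assume "N \<in> ?S ` partitions m k"
    then obtain M where M: "M \<in> partitions m k" and N: "N = ?S M" by auto
    let ?xs = "sorted_list_of_multiset M"
    have lx: "length ?xs = k" using M len_sl by (simp add: partitions_def)
    have sx: "sum_list ?xs = m" using M by (simp add: partitions_def sum_mset_sum_list[symmetric])
    have ds: "distinct (shiftl k ?xs)"
      using shiftl_sorted[OF _ lx] by (simp add: strict_sorted_iff)
    have z: "0 \<notin> set ?xs" using M by (simp add: partitions_def)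
    have "0 \<notin> set (shiftl k ?xs)"
    proof
      assume "0 \<in> set (shiftl k ?xs)"
      then obtain i where "i < k" "shiftl k ?xs ! i = 0" by (metis in_set_conv_nth shiftl_len)
      hence "?xs ! i + i = 0" "i < length ?xs" using lx by (simp_all only: shiftl_nth)
      hence "?xs ! i = 0" "i < length ?xs" by linarith+
      thus False using z by (metis nth_mem)
    qed
    moreover have "size N = k" using N by (simp add: shiftl_len)
    moreover have "sum_mset N = m + Kk k" using N by (simp add: sum_mset_sum_list shiftl_sum lx sx)
    moreover have "\<forall>x. count N x \<le> 1" using N ds by (simp add: distinct_count_atmost_1)
    ultimately show "N \<in> ?Q" using N by (simp add: partitions_def)
  qed
  have inj: "inj_on ?S (partitions m k)"
  proof
    fix M M' assume M: "M \<in> partitions m k" and M': "M' \<in> partitions m k" and eq: "?S M = ?S M'"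
    let ?xs = "sorted_list_of_multiset M" and ?ys = "sorted_list_of_multiset M'"
    have lx: "length ?xs = k" using M len_sl by (simp add: partitions_def)
    have ly: "length ?ys = k" using M' len_sl by (simp add: partitions_def)
    have a: "sorted (shiftl k ?xs)" "distinct (shiftl k ?xs)"
      using shiftl_sorted[OF _ lx] by (simp_all add: strict_sorted_iff)
    have b: "sorted (shiftl k ?ys)" "distinct (shiftl k ?ys)"
      using shiftl_sorted[OF _ ly] by (simp_all add: strict_sorted_iff)
    have "set (shiftl k ?xs) = set (shiftl k ?ys)" using eq by (metis set_mset_mset)
    hence e: "shiftl k ?xs = shiftl k ?ys" using a b sorted_distinct_set_unique by blast
    have "?xs ! i = ?ys ! i" if "i < k" for i
      using arg_cong[OF e, of "\<lambda>l. l ! i"] that by (simp add: shiftl_nth)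
    hence "?xs = ?ys" using lx ly by (simp add: nth_equalityI)
    thus "M = M'" by (metis mset_sorted_list_of_multiset)
  qed
  have "finite ?Q" using finite_partitions by simp
  hence "card (partitions m k) \<le> card ?Q" using card_inj_on_le[OF inj img] by simp
  thus ?thesis by (simp add: p_part_def q_part_def)
qed



lemma sum_list_map_Suc: "sum_list (map Suc l) = sum_list l + length l"
  by (induction l) auto

lemma sum_list_ge_length: "0 \<notin> set (l::nat list) \<Longrightarrow> length l \<le> sum_list l"
  by (induction l) auto

lemma card_comp_formula:
  assumes "k \<ge> 1" "m \<ge> 1"
  shows "card (comp m k) = (m - 1) choose (k - 1)"
proof (cases "k \<le> m")
  case True
  have e: "comp m k = map Suc ` {l. length l = k \<and> sum_list l = m - k}"
  proof
    show "map Suc ` {l. length l = k \<and> sum_list l = m - k} \<subseteq> comp m k"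
      using True by (auto simp: comp_def sum_list_map_Suc)
    show "comp m k \<subseteq> map Suc ` {l. length l = k \<and> sum_list l = m - k}"
    proof
      fix xs assume xs: "xs \<in> comp m k"
      let ?l = "map (\<lambda>x. x - 1) xs"
      have nz: "\<forall>x\<in>set xs. x \<noteq> 0" using xs unfolding comp_def by (metis (mono_tags, lifting) mem_Collect_eq)
      have e1: "map Suc ?l = xs"
        unfolding map_map using nz by (intro map_idI) simp
      have "length ?l = k" using xs by (simp add: comp_def)
      moreover have "sum_list ?l + k = m"
        using sum_list_map_Suc[of ?l] e1 xs \<open>length ?l = k\<close> by (simp add: comp_def)
      ultimately have "?l \<in> {l. length l = k \<and> sum_list l = m - k}" by simp
      hence "xs = map Suc ?l \<and> ?l \<in> {l. length l = k \<and> sum_list l = m - k}" using e1 by simp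
      thus "xs \<in> map Suc ` {l. length l = k \<and> sum_list l = m - k}" by blast
    qed
  qed
  have "card (comp m k) = card {l::nat list. length l = k \<and> sum_list l = m - k}"
    unfolding e by (rule card_image) (simp add: inj_on_def)
  also have "\<dots> = (m - k + k - 1) choose (m - k)" by (rule card_length_sum_list)
  also have "\<dots> = (m - 1) choose (k - 1)"
  proof -
    have a: "m - k + k - 1 = m - 1" using True by simp
    have b: "(m - 1) - (k - 1) = m - k" using True assms by arith
    have c: "k - 1 \<le> m - 1" using True by arith
    show ?thesis using binomial_symmetric[OF c] unfolding a b by simp
  qed
  finally show ?thesis .
next
  case False
  have "comp m k = {}" using False sum_list_ge_length by (fastforce simp: comp_def)
  thus ?thesis using False assms by simp
qed

lemma comp_rec:
  assumes "k \<ge> 1" "m \<ge> 1"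
  shows "(m - (k - 1)) * card (comp (m + 1) k) = m * card (comp m k)"
proof -
  have "Suc m - k = m - (k - 1)" using assms by arith
  thus ?thesis using assms binomial_absorb_comp[of m "k - 1"] by (simp add: card_comp_formula)
qed


lemma comp_step:
  assumes "k \<ge> 1" "m \<ge> 1"
  shows "(1 - (real k - 1) / real m) * real (card (comp (m + j + 1) k)) \<le> real (card (comp (m + j) k))"
proof -
  define a where "a = (real k - 1) / real m"
  define c1 where "c1 = real (card (comp (m + j + 1) k))"
  define c0 where "c0 = real (card (comp (m + j) k))"
  define N where "N = real (m + j)"
  have m0: "real m > 0" using assms by simp
  have N0: "N > 0" using m0 by (simp add: N_def)
  have a0: "a \<ge> 0" using assms by (simp add: a_def)
  have am: "a * real m = real k - 1" using m0 by (simp add: a_def)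
  have "a * real m \<le> a * N" using a0 by (intro mult_left_mono) (simp_all add: N_def)
  hence aN: "a * N \<ge> real k - 1" using am by simp
  have r: "real (m + j - (k - 1)) * c1 = N * c0"
    unfolding c1_def c0_def N_def using comp_rec[of k "m + j"] assms
    by (metis of_nat_mult add_leE le_add1 order_trans)
  have "N - (real k - 1) \<le> real (m + j - (k - 1))" using assms by (simp add: N_def)
  hence "(N - (real k - 1)) * c1 \<le> N * c0" using r by (metis mult_right_mono of_nat_0_le_iff c1_def)
  moreover have "(1 - a) * N \<le> N - (real k - 1)" using aN by (simp add: algebra_simps)
  moreover have "c1 \<ge> 0" by (simp add: c1_def)
  ultimately have "((1 - a) * N) * c1 \<le> N * c0"
    by (meson mult_right_mono order_trans)
  hence "N * ((1 - a) * c1) \<le> N * c0" by (simp add: algebra_simps)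
  hence "(1 - a) * c1 \<le> c0" using N0 by simp
  thus ?thesis by (simp add: a_def c1_def c0_def)
qed

lemma comp_ratio:
  assumes "k \<ge> 1" "m \<ge> 1"
  shows "(1 - real j * ((real k - 1) / real m)) * real (card (comp (m + j) k)) \<le> real (card (comp m k))"
proof (induction j)
  case 0 thus ?case by simp
next
  case (Suc j)
  define a where "a = (real k - 1) / real m"
  have a0: "a \<ge> 0" using assms by (simp add: a_def)
  have step: "(1 - a) * real (card (comp (m + j + 1) k)) \<le> real (card (comp (m + j) k))"
    using comp_step[OF assms] by (simp add: a_def)
  have IH: "(1 - real j * a) * real (card (comp (m + j) k)) \<le> real (card (comp m k))"
    using Suc.IH by (simp add: a_def)
  show ?case
  proof (cases "1 - real (Suc j) * a \<le> 0")
    case True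
    hence "(1 - real (Suc j) * a) * real (card (comp (m + Suc j) k)) \<le> 0"
      by (simp add: mult_nonpos_nonneg)
    thus ?thesis by (simp add: a_def)
  next
    case False
    have f1: "1 - real j * a \<ge> 0" using False a0 by (simp add: algebra_simps)
    have f2: "1 - a \<ge> 0" using False a0 by (simp add: algebra_simps)
      (smt (verit) mult_left_mono of_nat_0_le_iff mult_cancel_right1 a0)
    have "(1 - real (Suc j) * a) \<le> (1 - real j * a) * (1 - a)"
      using a0 by (simp add: algebra_simps)
    hence "(1 - real (Suc j) * a) * real (card (comp (m + j + 1) k))
        \<le> ((1 - real j * a) * (1 - a)) * real (card (comp (m + j + 1) k))"
      by (rule mult_right_mono) simp
    hence "(1 - real (Suc j) * a) * real (card (comp (m + Suc j) k))
        \<le> (1 - real j * a) * ((1 - a) * real (card (comp (m + j + 1) k)))"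
      by (simp add: mult.assoc)
    also have "\<dots> \<le> (1 - real j * a) * real (card (comp (m + j) k))"
      using step f1 by (rule mult_left_mono)
    also have "\<dots> \<le> real (card (comp m k))" using IH .
    finally show ?thesis by (simp add: a_def)
  qed
qed



definition pc :: "nat list \<Rightarrow> nat" where
  "pc x = card {(i,j). i < j \<and> j < length x \<and> x!i = x!j}"

lemma wt_add: "wt (A + {#x#}) = (count A x + 1) * wt A"
proof -
  have "(\<Prod>y\<in>set_mset (A+{#x#}). fact (count (A+{#x#}) y)) =
          (\<Prod>y\<in>set_mset (A+{#x#}). (if y = x then count A x + 1 else 1) * fact (count A y))"
    by (intro prod.cong) simp_all
  also have "\<dots> = (count A x + 1) * (\<Prod>y\<in>set_mset (A+{#x#}). fact (count A y))"
    by (simp add: prod.distrib)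
  also have "(\<Prod>y\<in>set_mset (A+{#x#}). fact (count A y)) = (\<Prod>y\<in>set_mset A. fact (count A y))"
    by (intro prod.mono_neutral_right) (auto simp: not_in_iff)
  finally show ?thesis by (simp add: wt_def)
qed

lemma wt_Cons: "wt (mset (a # xs)) = (count (mset xs) a + 1) * wt (mset xs)"
  using wt_add[of "mset xs" a] by simp

lemma pc_Cons: "pc (a # xs) = count (mset xs) a + pc xs"
proof -
  let ?n = "length xs"
  let ?S = "{(i,j). i < j \<and> j < ?n \<and> xs!i = xs!j}"
  let ?A = "(\<lambda>j. (0::nat, Suc j)) ` {j. j < ?n \<and> xs!j = a}"
  let ?B = "(\<lambda>(i,j). (Suc i, Suc j)) ` ?S"
  have e: "{(i,j). i < j \<and> j < length (a#xs) \<and> (a#xs)!i = (a#xs)!j} = ?A \<union> ?B"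
  proof (intro equalityI subsetI)
    fix p assume p: "p \<in> {(i,j). i < j \<and> j < length (a#xs) \<and> (a#xs)!i = (a#xs)!j}"
    obtain i j where ij: "p = (i,j)" by (cases p)
    from p ij have h: "i < j" "j < Suc ?n" "(a#xs)!i = (a#xs)!j" by auto
    then obtain j' where j': "j = Suc j'" by (cases j) auto
    show "p \<in> ?A \<union> ?B"
    proof (cases i)
      case 0
      hence "p = (0, Suc j')" "j' < ?n" "xs ! j' = a" using h ij j' by auto
      thus ?thesis by blast
    next
      case (Suc i')
      hence "p = (Suc i', Suc j')" "(i', j') \<in> ?S" using h ij j' by auto
      hence "p \<in> ?B" by (intro image_eqI[of _ _ "(i',j')"]) auto
      thus ?thesis by blast
    qed
  next
    fix p assume "p \<in> ?A \<union> ?B"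
    thus "p \<in> {(i,j). i < j \<and> j < length (a#xs) \<and> (a#xs)!i = (a#xs)!j}"
    proof
      assume "p \<in> ?A" thus ?thesis by auto
    next
      assume "p \<in> ?B"
      then obtain i j where "p = (Suc i, Suc j)" "(i,j) \<in> ?S" by auto
      thus ?thesis by simp
    qed
  qed
  have fS: "finite ?S" by (rule finite_subset[of _ "{..<?n} \<times> {..<?n}"]) auto
  have "card (?A \<union> ?B) = card ?A + card ?B"
    by (rule card_Un_disjoint) (use fS in auto)
  moreover have "card ?A = card {j. j < ?n \<and> xs!j = a}"
    by (rule card_image) (simp add: inj_on_def)
  moreover have "card ?B = card ?S"
    by (rule card_image) (auto simp: inj_on_def)
  moreover have "card {j. j < ?n \<and> xs!j = a} = count (mset xs) a"
    by (simp add: count_mset count_list_eq_length_filter length_filter_conv_card eq_commute)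
  ultimately show ?thesis unfolding pc_def e by simp
qed

lemma wt_ge_pc: "1 + pc x \<le> wt (mset x)"
proof (induction x)
  case Nil thus ?case by (simp add: pc_def wt_def)
next
  case (Cons a xs)
  have "1 + pc (a # xs) = 1 + pc xs + count (mset xs) a" by (simp add: pc_Cons)
  also have "\<dots> \<le> (1 + pc xs) * (count (mset xs) a + 1)" by (simp add: algebra_simps)
  also have "\<dots> \<le> wt (mset xs) * (count (mset xs) a + 1)" using Cons.IH by (rule mult_right_mono) simp
  finally show ?case by (metis wt_Cons mult.commute)
qed



lemma sum3:
  assumes "finite A" "i \<in> A" "j \<in> A" "l \<in> A" "i \<noteq> j" "i \<noteq> l" "j \<noteq> l"
  shows "sum f A = f i + f j + f l + sum f (A - {i,j,l})"
proof -
  have "sum f A = sum f (A - {i,j,l}) + sum f {i,j,l}"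
    using assms by (intro sum.subset_diff) auto
  thus ?thesis using assms by (simp add: add.commute add.left_commute)
qed

lemma sum_list_eq3:
  fixes x y :: "nat list"
  assumes len: "length y = length x" and ijl: "i < length x" "j < length x" "l < length x"
     "i \<noteq> j" "i \<noteq> l" "j \<noteq> l"
  and oth: "\<And>t. t < length x \<Longrightarrow> t \<notin> {i,j,l} \<Longrightarrow> y ! t = x ! t"
  and tr: "y!i + y!j + y!l = x!i + x!j + x!l"
  shows "sum_list y = sum_list x"
proof -
  have "sum_list y = (\<Sum>t\<in>{..<length x}. y ! t)" using len by (simp add: sum_list_sum_nth atLeast0LessThan)
  also have "\<dots> = y!i + y!j + y!l + (\<Sum>t\<in>{..<length x} - {i,j,l}. y ! t)"
    using ijl by (intro sum3) auto
  also have "(\<Sum>t\<in>{..<length x} - {i,j,l}. y ! t) = (\<Sum>t\<in>{..<length x} - {i,j,l}. x ! t)"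
    using oth by (intro sum.cong) auto
  also have "y!i + y!j + y!l + (\<Sum>t\<in>{..<length x} - {i,j,l}. x ! t) = (\<Sum>t\<in>{..<length x}. x ! t)"
    unfolding tr using ijl by (intro sum3[symmetric]) auto
  also have "\<dots> = sum_list x" by (simp add: sum_list_sum_nth atLeast0LessThan)
  finally show ?thesis .
qed

definition phi :: "nat \<Rightarrow> nat \<Rightarrow> nat \<Rightarrow> nat list \<Rightarrow> nat list" where
  "phi i j l x = x[i := min (x!i) (x!j), j := min (x!i) (x!j), l := x!l + ((x!i - x!j) + (x!j - x!i))]"

definition gg :: "nat \<Rightarrow> nat \<Rightarrow> nat \<Rightarrow> nat list \<Rightarrow> nat \<times> bool \<Rightarrow> nat list" where
  "gg i j l y = (\<lambda>(d,b). y[l := y!l - d, i := (if b then y!i + d else y!i), j := (if b then y!j else y!j + d)])"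

context
  fixes i j l k n :: nat
  assumes ijl: "i < k" "j < k" "l < k" "i \<noteq> j" "i \<noteq> l" "j \<noteq> l"
begin

lemma phi_nth:
  assumes "length x = k" "t < k"
  shows "phi i j l x ! t = (if t = l then x!l + ((x!i - x!j) + (x!j - x!i))
      else if t = i \<or> t = j then min (x!i) (x!j) else x!t)"
  using assms ijl by (auto simp: phi_def nth_list_update)

lemma phi_in:
  assumes x: "x \<in> comp n k"
  shows "phi i j l x \<in> {y \<in> comp n k. y!i = y!j}"
proof -
  have lx: "length x = k" using x by (simp add: comp_def)
  have ly: "length (phi i j l x) = k" using lx by (simp add: phi_def)
  have pos: "\<forall>t<k. x!t \<noteq> 0" using x lx by (auto simp: comp_def) (metis gr0I nth_mem)
  have "\<forall>t<k. phi i j l x ! t \<noteq> 0" using pos ijl lx by (auto simp: phi_nth min_def)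
  hence z: "0 \<notin> set (phi i j l x)" using ly by (metis in_set_conv_nth)
  have "sum_list (phi i j l x) = sum_list x"
    by (rule sum_list_eq3[where i=i and j=j and l=l]) (use ly lx ijl in \<open>auto simp: phi_nth\<close>)
  hence s: "sum_list (phi i j l x) = n" using x by (simp add: comp_def)
  have "phi i j l x ! i = phi i j l x ! j" using lx ijl by (simp add: phi_nth)
  thus ?thesis using ly z s by (simp add: comp_def)
qed

lemma phi_fiber:
  assumes y: "y \<in> comp n k"
  shows "{x \<in> comp n k. phi i j l x = y} \<subseteq> gg i j l y ` ({..<y!l} \<times> UNIV)"
proof
  fix x assume "x \<in> {x \<in> comp n k. phi i j l x = y}"
  hence x: "x \<in> comp n k" and e: "phi i j l x = y" by auto
  have lx: "length x = k" using x by (simp add: comp_def)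
  have ly: "length y = k" using y by (simp add: comp_def)
  have pos: "x!l \<noteq> 0" using x lx ijl by (auto simp: comp_def) (metis gr0I nth_mem)
  define d where "d = (x!i - x!j) + (x!j - x!i)"
  define b where "b = (x!j \<le> x!i)"
  have yt: "y ! t = phi i j l x ! t" for t using e by simp
  have dl: "d < y!l" using pos yt[of l] ijl lx by (simp add: phi_nth d_def)
  have "x = gg i j l y (d, b)"
  proof (rule nth_equalityI)
    show "length x = length (gg i j l y (d, b))" using lx ly by (simp add: gg_def)
    fix t assume t: "t < length x"
    show "x ! t = gg i j l y (d, b) ! t"
      using t lx ly ijl yt[of t] yt[of i] yt[of j] yt[of l]
      by (auto simp: gg_def nth_list_update phi_nth d_def b_def)
  qed
  thus "x \<in> gg i j l y ` ({..<y!l} \<times> UNIV)" using dl by blast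
qed

lemma card_fiber_le:
  assumes y: "y \<in> comp n k"
  shows "card {x \<in> comp n k. phi i j l x = y} \<le> 2 * (y!l)"
proof -
  have "card {x \<in> comp n k. phi i j l x = y} \<le> card (gg i j l y ` ({..<y!l} \<times> (UNIV::bool set)))"
    by (rule card_mono[OF _ phi_fiber[OF y]]) simp
  also have "\<dots> \<le> card ({..<y!l} \<times> (UNIV::bool set))" by (rule card_image_le) simp
  also have "\<dots> = 2 * (y!l)" by (simp add: card_cartesian_product)
  finally show ?thesis .
qed

lemma comp_le_fibers:
  "card (comp n k) \<le> (\<Sum>y\<in>{y \<in> comp n k. y!i = y!j}. 2 * (y!l))"
proof -
  let ?E = "{y \<in> comp n k. y!i = y!j}"
  have "card (comp n k) = (\<Sum>y\<in>phi i j l ` comp n k. card {x \<in> comp n k. phi i j l x = y})"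
    using sum.image_gen[OF finite_comp, of "\<lambda>_. 1::nat" n k "phi i j l"] by simp
  also have "\<dots> \<le> (\<Sum>y\<in>phi i j l ` comp n k. 2 * (y!l))"
    by (intro sum_mono card_fiber_le) (use phi_in in auto)
  also have "\<dots> \<le> (\<Sum>y\<in>?E. 2 * (y!l))"
    by (intro sum_mono2) (use phi_in finite_comp in auto)
  finally show ?thesis .
qed

end



definition Pairs :: "nat \<Rightarrow> (nat \<times> nat) set" where
  "Pairs k = {(i,j). i < j \<and> j < k}"

lemma finite_Pairs: "finite (Pairs k)"
  by (rule finite_subset[of _ "{..<k} \<times> {..<k}"]) (auto simp: Pairs_def)

lemma card_Pairs: "card (Pairs k) = Kk k"
proof (induction k)
  case 0 thus ?case by (simp add: Pairs_def Kk_def)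
next
  case (Suc k)
  have e: "Pairs (Suc k) = Pairs k \<union> (\<lambda>i. (i,k)) ` {..<k}"
    by (auto simp: Pairs_def less_Suc_eq)
  have "card (Pairs (Suc k)) = card (Pairs k) + card ((\<lambda>i. (i,k)) ` {..<k})"
    unfolding e by (rule card_Un_disjoint) (auto simp: finite_Pairs[unfolded Pairs_def] Pairs_def)
  also have "card ((\<lambda>i. (i,k)) ` {..<k}) = k" by (subst card_image) (auto simp: inj_on_def)
  finally show ?case using Suc.IH by (simp add: Kk_def)
qed

lemma Kk_formula: "2 * Kk k = k * (k - 1)"
proof (induction k)
  case 0 thus ?case by (simp add: Kk_def)
next
  case (Suc k) thus ?case by (cases k) (auto simp: Kk_def algebra_simps)
qed

lemma E_bound:
  assumes "(i,j) \<in> Pairs k"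
  shows "(k - 2) * card (comp n k) \<le> 2 * n * card {y \<in> comp n k. y!i = y!j}"
proof -
  let ?E = "{y \<in> comp n k. y!i = y!j}"
  let ?L = "{..<k} - {i,j}"
  have ij: "i < k" "j < k" "i \<noteq> j" using assms by (auto simp: Pairs_def)
  have cL: "card ?L = k - 2" using ij by (simp add: card_Diff_subset)
  have "card ?L * card (comp n k) = (\<Sum>l\<in>?L. card (comp n k))" by simp
  also have "\<dots> \<le> (\<Sum>l\<in>?L. \<Sum>y\<in>?E. 2 * (y!l))"
    by (intro sum_mono comp_le_fibers) (use ij in auto)
  also have "\<dots> = (\<Sum>y\<in>?E. 2 * (\<Sum>l\<in>?L. y!l))"
    by (subst sum.swap) (simp add: sum_distrib_left)
  also have "\<dots> \<le> (\<Sum>y\<in>?E. 2 * n)"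
  proof (intro sum_mono mult_left_mono)
    fix y assume y: "y \<in> ?E"
    have "(\<Sum>l\<in>?L. y!l) \<le> (\<Sum>l\<in>{..<k}. y!l)" by (intro sum_mono2) auto
    also have "\<dots> = n"
    proof -
      have ly: "length y = k" and sy: "sum_list y = n" using y by (simp_all add: comp_def)
      show ?thesis using sum_list_sum_nth[of y] ly sy by (simp add: atLeast0LessThan)
    qed
    finally show "(\<Sum>l\<in>?L. y!l) \<le> n" .
  qed simp
  also have "\<dots> = 2 * n * card ?E" by simp
  finally show ?thesis using cL by simp
qed

lemma pc_sum: "(\<Sum>x\<in>comp n k. pc x) = (\<Sum>p\<in>Pairs k. card {y \<in> comp n k. y!fst p = y!snd p})"
proof -
  have "pc x = (\<Sum>p\<in>Pairs k. if x!fst p = x!snd p then 1 else 0)" if "x \<in> comp n k" for x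
  proof -
    have "{(i,j). i < j \<and> j < length x \<and> x!i = x!j} = {p \<in> Pairs k. x!fst p = x!snd p}"
      using that by (auto simp: Pairs_def comp_def)
    thus ?thesis by (simp add: pc_def sum.If_cases finite_Pairs Int_def conj_commute)
  qed
  hence "(\<Sum>x\<in>comp n k. pc x) = (\<Sum>x\<in>comp n k. \<Sum>p\<in>Pairs k. if x!fst p = x!snd p then 1 else 0)"
    by (intro sum.cong) auto
  also have "\<dots> = (\<Sum>p\<in>Pairs k. \<Sum>x\<in>comp n k. if x!fst p = x!snd p then 1 else 0)"
    by (rule sum.swap)
  also have "\<dots> = (\<Sum>p\<in>Pairs k. card {y \<in> comp n k. y!fst p = y!snd p})"
    by (intro sum.cong refl) (simp add: sum.If_cases finite_comp Int_def conj_commute)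
  finally show ?thesis .
qed

lemma main2: "Kk k * (k - 2) * q_part n k \<le> 2 * n * p_part n k"
proof -
  let ?C = "card (comp n k)"
  have "fact k * (Kk k * (k - 2) * q_part n k) = Kk k * (k - 2) * (fact k * q_part n k)" by simp
  also have "\<dots> \<le> Kk k * (k - 2) * ?C" using q_le_comp by simp
  also have "\<dots> = (\<Sum>p\<in>Pairs k. (k - 2) * ?C)" by (simp add: card_Pairs)
  also have "\<dots> \<le> (\<Sum>p\<in>Pairs k. 2 * n * card {y \<in> comp n k. y!fst p = y!snd p})"
    by (intro sum_mono) (metis E_bound prod.collapse)
  also have "\<dots> = 2 * n * (\<Sum>x\<in>comp n k. pc x)" by (simp add: pc_sum sum_distrib_left)
  also have "(\<Sum>x\<in>comp n k. pc x) \<le> (\<Sum>x\<in>comp n k. wt (mset x))"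
    by (intro sum_mono) (metis wt_ge_pc add_leD2)
  also have "\<dots> = fact k * p_part n k" by (rule sum_wt)
  finally have "fact k * (Kk k * (k - 2) * q_part n k) \<le> fact k * (2 * n * p_part n k)" by simp
  thus ?thesis by simp
qed



lemma main1:
  assumes k: "k \<ge> 1" and n: "k * k \<le> n"
  shows "(1 - 2 * real k ^ 3 / real n) * real (p_part n k) \<le> real (q_part n k)"
proof -
  define K where "K = Kk k"
  have K2: "2 * K = k * (k - 1)" by (simp add: K_def Kk_formula)
  have Kn: "2 * K < n" using K2 k n
    by (metis diff_less le_trans mult_less_cancel1 not_le zero_less_one less_le_trans order.strict_implies_order)
  define m where "m = n - K"
  have m1: "m \<ge> 1" using Kn by (simp add: m_def)
  have mK: "m + K = n" using Kn by (simp add: m_def)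
  define \<delta> where "\<delta> = real (2 * K) * ((real k - 1) / real m)"
  have c1: "p_part m k \<le> q_part n k" using shift[of m k] mK by (simp add: K_def)
  have c2: "card (comp m k) \<le> fact k * p_part m k" by (rule comp_le_p)
  have c3: "(1 - \<delta>) * real (card (comp (m + 2 * K) k)) \<le> real (card (comp m k))"
    unfolding \<delta>_def by (rule comp_ratio[OF k m1])
  have c4: "fact k * q_part (n + K) k \<le> card (comp (m + 2 * K) k)"
  proof -
    have e: "m + 2 * K = n + K" using mK by simp
    show ?thesis unfolding e by (rule q_le_comp)
  qed
  have c5: "p_part n k \<le> q_part (n + K) k" using shift[of n k] by (simp add: K_def)
  have q0: "real (q_part n k) \<ge> 0" by simp
  have \<delta>b: "\<delta> \<le> 2 * real k ^ 3 / real n"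
  proof -
    have mpos: "real m > 0" using m1 by simp
    have "2 * real m \<ge> real n" using mK Kn by simp
    have "\<delta> = real (k * (k - 1)) * (real k - 1) / real m" using K2 by (simp add: \<delta>_def)
    also have "\<dots> \<le> real k ^ 2 * real k / real m"
    proof (intro divide_right_mono mult_mono)
      have "k * (k - 1) \<le> k * k" by simp
      thus "real (k * (k - 1)) \<le> real k ^ 2" unfolding power2_eq_square by (metis of_nat_le_iff of_nat_mult)
    qed (use k in auto)
    also have "\<dots> = real k ^ 3 / real m" by (simp add: power3_eq_cube power2_eq_square)
    also have "\<dots> = 2 * real k ^ 3 / (2 * real m)" by simp
    also have "\<dots> \<le> 2 * real k ^ 3 / real n"
      by (rule divide_left_mono) (use mpos \<open>2 * real m \<ge> real n\<close> Kn in auto)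
    finally show ?thesis .
  qed
  show ?thesis
  proof (cases "1 - \<delta> \<ge> 0")
    case False
    hence "1 - 2 * real k ^ 3 / real n < 0" using \<delta>b by simp
    hence "(1 - 2 * real k ^ 3 / real n) * real (p_part n k) \<le> 0" by (simp add: mult_nonpos_nonneg)
    thus ?thesis using q0 by linarith
  next
    case True
    have fk: "real (fact k) > 0" by simp
    have "real (fact k) * ((1 - 2 * real k ^ 3 / real n) * real (p_part n k))
        \<le> real (fact k) * ((1 - \<delta>) * real (p_part n k))"
      using \<delta>b fk by (intro mult_left_mono mult_right_mono) auto
    also have "\<dots> = (1 - \<delta>) * real (fact k * p_part n k)" by simp
    also have "\<dots> \<le> (1 - \<delta>) * real (card (comp (m + 2 * K) k))"
    proof (rule mult_left_mono[OF _ True])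
      have "fact k * p_part n k \<le> fact k * q_part (n + K) k" using c5 by simp
      also have "\<dots> \<le> card (comp (m + 2 * K) k)" using c4 .
      finally show "real (fact k * p_part n k) \<le> real (card (comp (m + 2 * K) k))" by linarith
    qed
    also have "\<dots> \<le> real (card (comp m k))" using c3 .
    also have "\<dots> \<le> real (fact k * q_part n k)"
    proof -
      have "card (comp m k) \<le> fact k * q_part n k" using c2 c1 by (meson le_trans mult_le_mono2)
      thus ?thesis by linarith
    qed
    also have "\<dots> = real (fact k) * real (q_part n k)" by simp
    finally show ?thesis using fk by (simp only: mult_le_cancel_left_pos)
  qed
qed

lemma main2':
  assumes k: "k \<ge> 3"
  shows "real k ^ 3 * real (q_part n k) \<le> 18 * real n * real (p_part n k)"
proof -
  have a: "Kk k * (k - 2) * q_part n k \<le> 2 * n * p_part n k" by (rule main2)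
  obtain t where t: "k = t + 3" using k by (metis add.commute le_Suc_ex)
  have e: "2 * Kk k * (k - 2) = (t + 3) * (t + 2) * (t + 1)"
  proof -
    have "2 * Kk k * (k - 2) = k * (k - 1) * (k - 2)" by (simp add: Kk_formula)
    also have "\<dots> = (t + 3) * (t + 2) * (t + 1)" using t by simp
    finally show ?thesis .
  qed
  have b0: "2 * (t + 3) ^ 3 \<le> 9 * ((t + 3) * (t + 2) * (t + 1))"
    by (simp add: power3_eq_cube algebra_simps)
  have b: "real k ^ 3 \<le> 9 * real (Kk k * (k - 2))"
  proof -
    have "real (2 * k ^ 3) \<le> real (9 * (2 * Kk k * (k - 2)))" unfolding e using b0 t
      by (simp only: of_nat_le_iff)
    thus ?thesis by simp
  qed
  have a': "real (Kk k * (k - 2)) * real (q_part n k) \<le> 2 * real n * real (p_part n k)"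
  proof -
    have "real (Kk k * (k - 2) * q_part n k) \<le> real (2 * n * p_part n k)" using a by (simp only: of_nat_le_iff)
    thus ?thesis by simp
  qed
  have "real k ^ 3 * real (q_part n k) \<le> 9 * real (Kk k * (k - 2)) * real (q_part n k)"
    using b by (intro mult_right_mono) auto
  also have "\<dots> \<le> 9 * (2 * real n * real (p_part n k))" using a' by linarith
  finally show ?thesis by simp
qed

lemma q_le_p: "q_part n k \<le> p_part n k"
  unfolding q_part_def p_part_def by (rule card_mono[OF finite_partitions]) auto

lemma p_pos: "1 \<le> k \<Longrightarrow> k \<le> n \<Longrightarrow> p_part n k > 0"
proof -
  assume "1 \<le> k" "k \<le> n"
  let ?x = "replicate (k - 1) (1::nat) @ [n - (k - 1)]"
  have "?x \<in> comp n k" using \<open>1 \<le> k\<close> \<open>k \<le> n\<close> by (auto simp: comp_def sum_list_replicate)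
  hence "mset ?x \<in> partitions n k" unfolding partitions_eq by (rule imageI)
  thus ?thesis unfolding p_part_def using finite_partitions card_gt_0_iff by blast
qed



theorem mainTheorem4:
  fixes n k :: "nat \<Rightarrow> nat"
  assumes "\<forall>m\<ge>1. k m \<ge> 2 \<and> n m \<ge> k m"
  shows "(filterlim (\<lambda>m. real (n m) / real (k m) ^ 3) at_top sequentially \<longrightarrow>
           (\<lambda>m. real (q_part (n m) (k m)) / real (p_part (n m) (k m))) \<longlonglongrightarrow> 1)
       \<and> ((\<lambda>m. real (n m) / real (k m) ^ 3) \<longlonglongrightarrow> 0 \<longrightarrow>
           (\<lambda>m. real (q_part (n m) (k m)) / real (p_part (n m) (k m))) \<longlonglongrightarrow> 0)"
proof (intro conjI impI)
  define a where "a = (\<lambda>m. real (n m) / real (k m) ^ 3)"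
  define r where "r = (\<lambda>m. real (q_part (n m) (k m)) / real (p_part (n m) (k m)))"
  have ev1: "eventually (\<lambda>m. m \<ge> 1) sequentially" by (rule eventually_ge_at_top)
  have basic: "0 \<le> r m \<and> r m \<le> 1" for m
  proof -
    have "q_part (n m) (k m) \<le> p_part (n m) (k m)" by (rule q_le_p)
    thus ?thesis unfolding r_def by (cases "p_part (n m) (k m) = 0") (auto simp: divide_le_eq_1)
  qed
  {
    assume lim: "filterlim (\<lambda>m. real (n m) / real (k m) ^ 3) at_top sequentially"
    hence lim': "filterlim a at_top sequentially" by (simp add: a_def)
    have ev2: "eventually (\<lambda>m. a m \<ge> 1) sequentially"
      using lim' by (simp add: filterlim_at_top)
    have low: "eventually (\<lambda>m. 1 - 2 / a m \<le> r m) sequentially"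
      using ev1 ev2
    proof eventually_elim
      case (elim m)
      have km: "k m \<ge> 2" "n m \<ge> k m" using assms elim(1) by auto
      have kpos: "real (k m) > 0" using km by simp
      have "real (k m) ^ 3 \<le> real (n m)" using elim(2) kpos by (simp add: a_def field_simps)
      hence "k m ^ 3 \<le> n m" by (metis of_nat_le_iff of_nat_power)
      moreover have "k m * k m \<le> k m ^ 3" using km by (simp add: power3_eq_cube)
      ultimately have kk: "k m * k m \<le> n m" by linarith
      have np: "real (n m) > 0" using km by simp
      have m1: "(1 - 2 * real (k m) ^ 3 / real (n m)) * real (p_part (n m) (k m)) \<le> real (q_part (n m) (k m))"
        using main1[of "k m" "n m"] km kk by simp
      have pp: "real (p_part (n m) (k m)) > 0" using p_pos[of "k m" "n m"] km by simp
      have "2 / a m = 2 * real (k m) ^ 3 / real (n m)" using np kpos by (simp add: a_def)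
      thus ?case using m1 pp unfolding r_def by (simp add: le_divide_eq)
    qed
    have t1: "(\<lambda>m. 1 - 2 / a m) \<longlonglongrightarrow> 1"
    proof -
      have "(\<lambda>m. 2 / a m) \<longlonglongrightarrow> 0"
        by (rule tendsto_divide_0[OF tendsto_const]) (rule filterlim_at_top_imp_at_infinity[OF lim'])
      from tendsto_diff[OF tendsto_const[of 1] this] show ?thesis by simp
    qed
    have "r \<longlonglongrightarrow> 1"
      by (rule tendsto_sandwich[OF low _ t1 tendsto_const]) (simp add: basic)
    thus "(\<lambda>m. real (q_part (n m) (k m)) / real (p_part (n m) (k m))) \<longlonglongrightarrow> 1" by (simp add: r_def)
  }
  {
    assume lim: "(\<lambda>m. real (n m) / real (k m) ^ 3) \<longlonglongrightarrow> 0"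
    hence lim': "a \<longlonglongrightarrow> 0" by (simp add: a_def)
    have ev2: "eventually (\<lambda>m. a m < 1/4) sequentially"
      using order_tendstoD(2)[OF lim', of "1/4"] by simp
    have up: "eventually (\<lambda>m. r m \<le> 18 * a m) sequentially"
      using ev1 ev2
    proof eventually_elim
      case (elim m)
      have km: "k m \<ge> 2" "n m \<ge> k m" using assms elim(1) by auto
      have k3: "k m \<ge> 3"
      proof (rule ccontr)
        assume "\<not> k m \<ge> 3"
        hence "k m = 2" using km by simp
        hence "a m = real (n m) / 8" by (simp add: a_def)
        moreover have "real (n m) \<ge> 2" using km by simp
        ultimately show False using elim(2) by simp
      qed
      have kpos: "real (k m) > 0" using km by simp
      have pp: "real (p_part (n m) (k m)) > 0" using p_pos[of "k m" "n m"] km by simp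
      have m2: "real (k m) ^ 3 * real (q_part (n m) (k m)) \<le> 18 * real (n m) * real (p_part (n m) (k m))"
        by (rule main2'[OF k3])
      have "r m = real (q_part (n m) (k m)) / real (p_part (n m) (k m))" by (simp add: r_def)
      also have "\<dots> \<le> 18 * real (n m) / real (k m) ^ 3"
        using m2 pp kpos by (simp add: divide_simps mult.commute mult.left_commute)
      also have "\<dots> = 18 * a m" by (simp add: a_def)
      finally show ?case .
    qed
    have t0: "(\<lambda>m. 18 * a m) \<longlonglongrightarrow> 0" using tendsto_mult[OF tendsto_const[of 18] lim'] by simp
    have "r \<longlonglongrightarrow> 0"
      by (rule tendsto_sandwich[OF _ up tendsto_const t0]) (simp add: basic)
    thus "(\<lambda>m. real (q_part (n m) (k m)) / real (p_part (n m) (k m))) \<longlonglongrightarrow> 0" by (simp add: r_def)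
  }
qed

end
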